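(* Let $n$ be even and let $N=(P,L)$ be a $6$-net of order $n$ with parallel classes $\Pi_0,\dots,\Pi_5$, and let $\mathcal R$ be a relation on $N$ of type $(\lambda_0,\dots,\lambda_5)$. Put $g_i=\frac n2-\lambda_i$ for $0\le i\le 5$. Then for every binary string $\mathbf b=(b_0,\dots,b_5)$ with an even number of ones, $$t_{\mathbf b}+t_{\bar{\mathbf b}}=\frac{1}{16}n^2+\frac14\sum_{0\le i<j\le 5}(-1)^{b_i+b_j}g_ig_j,$$ where $\bar{\mathbf b}$ is the bitwise complement of $\mathbf b$.
   Context: A $k$-net of order $n$ is a set $P$ of $n^2$ points together with a set $L$ of $kn$ lines (subsets of $P$), each line containing $n$ points and each point lying on $k$ lines, such that $L$ partitions into $k$ parallel classes $\Pi_0,\dots,\Pi_{k-1}$ of $n$ pairwise disjoint lines each, and any two lines from different parallel classes meet in exactly one point. A relation on a net is a set $\mathcal R\subseteq L$ of lines such that every point lies on an even number of lines of $\mathcal R$ (equivalently, the $\mathbb F_2$ incidence vectors of the lines in $\mathcal R$ sum to zero). Its type is $(\lambda_0,\dots,\lambda_{k-1})$ where $\lambda_i=|\mathcal R\cap\Pi_i|$. The type of a point $p$ is the binary string $\mathbf b\in\{0,1\}^k$ with $b_i=1$ iff the line of $\Pi_i$ through $p$ lies in $\mathcal R$; $t_{\mathbf b}$ denotes the number of points of type $\mathbf b$. *)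

theory Defs
  imports Complex_Main
begin

definition is_net :: "nat \<Rightarrow> nat \<Rightarrow> 'p set \<Rightarrow> 'p set set \<Rightarrow> (nat \<Rightarrow> 'p set set) \<Rightarrow> bool" where
  "is_net k n P L C \<longleftrightarrow>
     finite P \<and> card P = n^2 \<and>
     finite L \<and> card L = k * n \<and>
     (\<forall>l\<in>L. l \<subseteq> P \<and> card l = n) \<and>
     (\<forall>p\<in>P. card {l\<in>L. p \<in> l} = k) \<and>
     L = (\<Union>i<k. C i) \<and>
     (\<forall>i<k. card (C i) = n) \<and>
     (\<forall>i<k. \<forall>j<k. i \<noteq> j \<longrightarrow> C i \<inter> C j = {}) \<and>
     (\<forall>i<k. \<forall>l\<in>C i. \<forall>m\<in>C i. l \<noteq> m \<longrightarrow> l \<inter> m = {}) \<and>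
     (\<forall>i<k. \<forall>j<k. i \<noteq> j \<longrightarrow> (\<forall>l\<in>C i. \<forall>m\<in>C j. card (l \<inter> m) = 1))"

definition is_relation :: "'p set \<Rightarrow> 'p set set \<Rightarrow> 'p set set \<Rightarrow> bool" where
  "is_relation P L R \<longleftrightarrow> R \<subseteq> L \<and> (\<forall>p\<in>P. even (card {l\<in>R. p \<in> l}))"

definition rel_type :: "(nat \<Rightarrow> 'p set set) \<Rightarrow> 'p set set \<Rightarrow> nat \<Rightarrow> nat" where
  "rel_type C R i = card (R \<inter> C i)"

definition point_type :: "nat \<Rightarrow> (nat \<Rightarrow> 'p set set) \<Rightarrow> 'p set set \<Rightarrow> 'p \<Rightarrow> nat \<Rightarrow> bool" where
  "point_type k C R p i = (i < k \<and> (\<exists>l\<in>C i. p \<in> l \<and> l \<in> R))"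

text \<open>t_b: number of points of type b (b a binary string of length k, given as a
  function on indices 0..k-1; values at indices \<ge> k are ignored).\<close>
definition t_count :: "nat \<Rightarrow> 'p set \<Rightarrow> (nat \<Rightarrow> 'p set set) \<Rightarrow> 'p set set \<Rightarrow> (nat \<Rightarrow> bool) \<Rightarrow> nat" where
  "t_count k P C R b = card {p\<in>P. \<forall>i<k. point_type k C R p i = b i}"

end

theory Submission
  imports Defs
begin

lemma core0:
  fixes a b c d e f :: real
  assumes "a = 1 \<or> a = -1" "b = 1 \<or> b = -1" "c = 1 \<or> c = -1" "d = 1 \<or> d = -1" "e = 1 \<or> e = -1" "f = 1 \<or> f = -1"
   "a*b*c*d*e*f = 1"
  shows "of_bool ((a=1\<and>b=1\<and>c=1\<and>d=1\<and>e=1\<and>f=1) \<or> (a=-1\<and>b=-1\<and>c=-1\<and>d=-1\<and>e=-1\<and>f=-1)) = 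
   (1 + (a*b+a*c+a*d+a*e+a*f+b*c+b*d+b*e+b*f+c*d+c*e+c*f+d*e+d*f+e*f))/16"
  using assms(7) by (rule_tac disjE[OF assms(1)]; rule_tac disjE[OF assms(2)]; rule_tac disjE[OF assms(3)]; rule_tac disjE[OF assms(4)]; rule_tac disjE[OF assms(5)]; rule_tac disjE[OF assms(6)]; simp)

lemma six: "{..<6::nat} = {0,1,2,3,4,5}" by (auto simp: lessThan_def)

lemma all6: "(\<forall>i<6. P i) \<longleftrightarrow> P 0 \<and> P 1 \<and> P 2 \<and> P 3 \<and> P 4 \<and> P (5::nat)"
  using six by (metis lessThan_iff insert_iff empty_iff)

lemma sum6: "(\<Sum>i<6. \<Sum>j\<in>{i<..<6}. y i * y j) = y 0*y 1+y 0*y 2+y 0*y 3+y 0*y 4+y 0*y 5+y 1*y 2+y 1*y 3+y 1*y 4+y 1*y 5+y 2*y 3+y 2*y 4+y 2*y 5+y 3*y 4+y 3*y 5+(y 4*y (5::nat)::real)"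
proof -
  have e: "{i<..<6} = {Suc i..<6}" for i :: nat by auto
  show ?thesis unfolding e six by (simp add: sum.atLeast_Suc_lessThan eval_nat_numeral algebra_simps)
qed

lemma prod6: "(\<Prod>i<6. y i) = y 0*y 1*y 2*y 3*y 4*(y (5::nat)::real)"
  unfolding six by (simp add: algebra_simps)

lemma core:
  fixes y :: "nat \<Rightarrow> real"
  assumes "\<forall>i<6. y i = 1 \<or> y i = -1" "(\<Prod>i<6. y i) = 1"
  shows "of_bool ((\<forall>i<6. y i = 1) \<or> (\<forall>i<6. y i = -1)) = (1 + (\<Sum>i<6. \<Sum>j\<in>{i<..<6}. y i * y j)) / 16"
  unfolding all6 sum6 using assms unfolding all6 prod6 by (intro core0) auto

lemma netD:
  assumes "is_net k n P L C"
  shows "finite P"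
    "card P = n^2"
    "finite L"
    "card L = k * n"
    "\<forall>l\<in>L. l \<subseteq> P \<and> card l = n"
    "\<forall>p\<in>P. card {l\<in>L. p \<in> l} = k"
    "L = (\<Union>i<k. C i)"
    "\<forall>i<k. card (C i) = n"
    "\<forall>i<k. \<forall>j<k. i \<noteq> j \<longrightarrow> C i \<inter> C j = {}"
    "\<forall>i<k. \<forall>l\<in>C i. \<forall>m\<in>C i. l \<noteq> m \<longrightarrow> l \<inter> m = {}"
    "\<forall>i<k. \<forall>j<k. i \<noteq> j \<longrightarrow> (\<forall>l\<in>C i. \<forall>m\<in>C j. card (l \<inter> m) = 1)"
proof -
  note H = assms[unfolded is_net_def]
  show "finite P" using H by (elim conjE)
  show "card P = n^2" using H by (elim conjE)
  show "finite L" using H by (elim conjE)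
  show "card L = k * n" using H by (elim conjE)
  show "\<forall>l\<in>L. l \<subseteq> P \<and> card l = n" using H by (elim conjE)
  show "\<forall>p\<in>P. card {l\<in>L. p \<in> l} = k" using H by (elim conjE)
  show "L = (\<Union>i<k. C i)" using H by (elim conjE)
  show "\<forall>i<k. card (C i) = n" using H by (elim conjE)
  show "\<forall>i<k. \<forall>j<k. i \<noteq> j \<longrightarrow> C i \<inter> C j = {}" using H by (elim conjE)
  show "\<forall>i<k. \<forall>l\<in>C i. \<forall>m\<in>C i. l \<noteq> m \<longrightarrow> l \<inter> m = {}" using H by (elim conjE)
  show "\<forall>i<k. \<forall>j<k. i \<noteq> j \<longrightarrow> (\<forall>l\<in>C i. \<forall>m\<in>C j. card (l \<inter> m) = 1)" using H by (elim conjE)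
qed

lemma net_basic:
  assumes "is_net k n P L C" "i < k"
  shows "finite (C i)" "C i \<subseteq> L" "\<And>l. l \<in> C i \<Longrightarrow> l \<subseteq> P \<and> finite l \<and> card l = n"
proof -
  have L: "L = (\<Union>i<k. C i)" "finite L" "finite P" "\<forall>l\<in>L. l \<subseteq> P \<and> card l = n"
    using netD(7,3,1,5)[OF assms(1)] by auto
  show s: "C i \<subseteq> L" using L(1) assms(2) by auto
  then show "finite (C i)" using L(2) by (rule finite_subset)
  fix l assume "l \<in> C i"
  then have "l \<in> L" using s by auto
  then have "l \<subseteq> P" "card l = n" using L(4) by auto
  then show "l \<subseteq> P \<and> finite l \<and> card l = n" using L(3) finite_subset by auto
qed

lemma net_cover:
  assumes "is_net k n P L C" "i < k" "p \<in> P"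
  shows "\<exists>l\<in>C i. p \<in> l"
proof -
  note nb = net_basic[OF assms(1,2)]
  have sub: "\<Union>(C i) \<subseteq> P" using nb(3) by auto
  have dis: "pairwise disjnt (C i)" using netD(10)[OF assms(1)] assms(2) unfolding pairwise_def disjnt_def by blast
  have "card (\<Union>(C i)) = sum card (C i)"
    by (rule card_Union_disjoint[OF dis]) (use nb(3) in auto)
  also have "\<dots> = n * n" using nb(3) netD(8)[OF assms(1)] assms(2) by simp
  also have "\<dots> = card P" using netD(2)[OF assms(1)] by (simp add: power2_eq_square)
  finally have "\<Union>(C i) = P"
    by (rule card_subset_eq[OF netD(1)[OF assms(1)] sub])
  then show ?thesis using assms(3) by auto
qed

lemma net_uniq:
  assumes "is_net k n P L C" "i < k" "l \<in> C i" "m \<in> C i" "p \<in> l" "p \<in> m"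
  shows "l = m"
proof (rule ccontr)
  assume "l \<noteq> m"
  moreover have "\<forall>l\<in>C i. \<forall>m\<in>C i. l \<noteq> m \<longrightarrow> l \<inter> m = {}"
    using netD(10)[OF assms(1)] assms(2) by simp
  ultimately have "l \<inter> m = {}" using assms(3,4) by simp
  then show False using assms(5,6) by auto
qed

definition lnp :: "(nat \<Rightarrow> 'p set set) \<Rightarrow> nat \<Rightarrow> 'p \<Rightarrow> 'p set" where
  "lnp C i p = (THE l. l \<in> C i \<and> p \<in> l)"

lemma ln_eq:
  assumes "is_net k n P L C" "i < k" "l \<in> C i" "p \<in> l"
  shows "lnp C i p = l"
  unfolding lnp_def
proof (rule the_equality)
  show "l \<in> C i \<and> p \<in> l" using assms(3,4) by simp
  fix x assume "x \<in> C i \<and> p \<in> x"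
  then show "x = l" using net_uniq[OF assms(1,2) _ assms(3) _ assms(4)] by blast
qed

lemma ln_mem:
  assumes "is_net k n P L C" "i < k" "p \<in> P"
  shows "lnp C i p \<in> C i" "p \<in> lnp C i p"
proof -
  obtain l where l: "l \<in> C i" "p \<in> l" using net_cover[OF assms] by blast
  then have "lnp C i p = l" by (rule ln_eq[OF assms(1,2)])
  then show "lnp C i p \<in> C i" "p \<in> lnp C i p" using l by auto
qed

lemma pt_ln:
  assumes "is_net k n P L C" "i < k" "p \<in> P"
  shows "point_type k C R p i \<longleftrightarrow> lnp C i p \<in> R"
proof
  assume "point_type k C R p i"
  then obtain l where l: "l \<in> C i" "p \<in> l" "l \<in> R" unfolding point_type_def by blast
  then have "lnp C i p = l" using ln_eq[OF assms(1,2)] by blast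
  then show "lnp C i p \<in> R" using l by simp
next
  assume "lnp C i p \<in> R"
  then show "point_type k C R p i" using ln_mem[OF assms] assms(2) unfolding point_type_def by blast
qed

lemma pt_even:
  assumes "is_net k n P L C" "is_relation P L R" "p \<in> P"
  shows "even (card {i. i < k \<and> lnp C i p \<in> R})"
proof -
  have seq: "{l\<in>R. p \<in> l} = (\<lambda>i. lnp C i p) ` {i. i < k \<and> lnp C i p \<in> R}"
  proof
    show "{l\<in>R. p \<in> l} \<subseteq> (\<lambda>i. lnp C i p) ` {i. i < k \<and> lnp C i p \<in> R}"
    proof
      fix l assume l: "l \<in> {l\<in>R. p \<in> l}"
      then have "l \<in> L" using assms(2) unfolding is_relation_def by auto
      then obtain i where i: "i < k" "l \<in> C i" using netD(7)[OF assms(1)] by auto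
      then have "lnp C i p = l" using ln_eq[OF assms(1) i] l by auto
      then show "l \<in> (\<lambda>i. lnp C i p) ` {i. i < k \<and> lnp C i p \<in> R}" using i l by auto
    qed
    show "(\<lambda>i. lnp C i p) ` {i. i < k \<and> lnp C i p \<in> R} \<subseteq> {l\<in>R. p \<in> l}"
      using ln_mem[OF assms(1) _ assms(3)] by auto
  qed
  have inj: "inj_on (\<lambda>i. lnp C i p) {i. i < k \<and> lnp C i p \<in> R}"
  proof
    fix i j assume "i \<in> {i. i < k \<and> lnp C i p \<in> R}" "j \<in> {i. i < k \<and> lnp C i p \<in> R}"
      "lnp C i p = lnp C j p"
    then have ij: "i < k" "j < k" and eq: "lnp C i p = lnp C j p" by auto
    have "lnp C i p \<in> C i" "lnp C j p \<in> C j"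
      using ln_mem(1)[OF assms(1) _ assms(3)] ij by auto
    then have "lnp C i p \<in> C i \<inter> C j" using eq by auto
    then show "i = j" using netD(9)[OF assms(1)] ij by blast
  qed
  have "card {l\<in>R. p \<in> l} = card {i. i < k \<and> lnp C i p \<in> R}"
    unfolding seq by (rule card_image[OF inj])
  moreover have "even (card {l\<in>R. p \<in> l})" using assms(2,3) unfolding is_relation_def by blast
  ultimately show ?thesis by simp
qed


lemma sum_e:
  assumes "is_net k n P L C" "i < k"
  shows "(\<Sum>l\<in>C i. (if l \<in> R then -1 else 1::real)) = real n - 2 * real (rel_type C R i)"
proof -
  have f: "finite (C i)" and c: "card (C i) = n"
    using net_basic(1)[OF assms] netD(8)[OF assms(1)] assms(2) by auto
  have "(\<Sum>l\<in>C i. (if l \<in> R then -1 else 1::real)) = (\<Sum>l\<in>C i. 1 - 2 * (if l \<in> R then 1 else 0))"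
    by (rule sum.cong) auto
  also have "\<dots> = real (card (C i)) - 2 * (\<Sum>l\<in>C i. (if l \<in> R then 1 else 0))"
    by (simp add: sum_subtractf sum_distrib_left)
  also have "(\<Sum>l\<in>C i. (if l \<in> R then 1 else 0::real)) = real (card {l\<in>C i. l \<in> R})"
    using sum.inter_filter[OF f, of "\<lambda>_. 1::real" "\<lambda>l. l \<in> R"] by simp
  also have "{l\<in>C i. l \<in> R} = R \<inter> C i" by auto
  finally show ?thesis unfolding rel_type_def c by simp
qed

lemma bij_lines:
  assumes "is_net k n P L C" "i < k" "j < k" "i \<noteq> j"
  shows "bij_betw (\<lambda>p. (lnp C i p, lnp C j p)) P (C i \<times> C j)"
  unfolding bij_betw_def
proof
  have one: "\<forall>l\<in>C i. \<forall>m\<in>C j. card (l \<inter> m) = 1"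
    using netD(11)[OF assms(1)] assms(2-4) by blast
  show "inj_on (\<lambda>p. (lnp C i p, lnp C j p)) P"
  proof
    fix p q assume p: "p \<in> P" and q: "q \<in> P" and e: "(lnp C i p, lnp C j p) = (lnp C i q, lnp C j q)"
    have "p \<in> lnp C i p \<inter> lnp C j p" "q \<in> lnp C i p \<inter> lnp C j p"
      using ln_mem[OF assms(1,2) p] ln_mem[OF assms(1,3) p] ln_mem[OF assms(1,2) q] ln_mem[OF assms(1,3) q] e
      by auto
    moreover have "card (lnp C i p \<inter> lnp C j p) = 1"
      using one ln_mem(1)[OF assms(1,2) p] ln_mem(1)[OF assms(1,3) p] by blast
    ultimately show "p = q" by (metis card_1_singletonE singletonD)
  qed
  show "(\<lambda>p. (lnp C i p, lnp C j p)) ` P = C i \<times> C j"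
  proof
    show "(\<lambda>p. (lnp C i p, lnp C j p)) ` P \<subseteq> C i \<times> C j"
      using ln_mem(1)[OF assms(1,2)] ln_mem(1)[OF assms(1,3)] by auto
    show "C i \<times> C j \<subseteq> (\<lambda>p. (lnp C i p, lnp C j p)) ` P"
    proof
      fix x assume "x \<in> C i \<times> C j"
      then obtain l m where x: "x = (l, m)" "l \<in> C i" "m \<in> C j" by blast
      then have "card (l \<inter> m) = 1" using one by blast
      then obtain p where "l \<inter> m = {p}" by (rule card_1_singletonE)
      then have p: "p \<in> l" "p \<in> m" by auto
      then have "p \<in> P" using net_basic(3)[OF assms(1,2) x(2)] by auto
      moreover have "lnp C i p = l" "lnp C j p = m"
        using ln_eq[OF assms(1,2) x(2) p(1)] ln_eq[OF assms(1,3) x(3) p(2)] by auto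
      ultimately show "x \<in> (\<lambda>p. (lnp C i p, lnp C j p)) ` P" using x(1) by force
    qed
  qed
qed

lemma sum_pair:
  assumes "is_net k n P L C" "i < k" "j < k" "i \<noteq> j"
  shows "(\<Sum>p\<in>P. (if lnp C i p \<in> R then -1 else 1::real) * (if lnp C j p \<in> R then -1 else 1))
     = (real n - 2 * real (rel_type C R i)) * (real n - 2 * real (rel_type C R j))"
proof -
  let ?e = "\<lambda>l. (if l \<in> R then -1 else 1::real)"
  have "(\<Sum>p\<in>P. ?e (lnp C i p) * ?e (lnp C j p)) = (\<Sum>x\<in>C i \<times> C j. ?e (fst x) * ?e (snd x))"
    using sum.reindex_bij_betw[OF bij_lines[OF assms], of "\<lambda>x. ?e (fst x) * ?e (snd x)"] by simp
  also have "\<dots> = (\<Sum>l\<in>C i. \<Sum>m\<in>C j. ?e l * ?e m)"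
    by (simp add: sum.cartesian_product split_beta)
  also have "\<dots> = (\<Sum>l\<in>C i. ?e l) * (\<Sum>m\<in>C j. ?e m)"
    by (simp add: sum_product)
  finally show ?thesis using sum_e[OF assms(1,2)] sum_e[OF assms(1,3)] by simp
qed


lemma prod_sign:
  assumes "finite A"
  shows "(\<Prod>i\<in>A. if Q i then -1 else 1::real) = (-1) ^ card {i\<in>A. Q i}"
proof -
  have "(\<Prod>i\<in>A. if Q i then -1 else 1::real) = (\<Prod>i\<in>A \<inter> {i. Q i}. -1) * (\<Prod>i\<in>A \<inter> - {i. Q i}. 1)"
    by (rule prod.If_cases[OF assms])
  also have "A \<inter> {i. Q i} = {i\<in>A. Q i}" by auto
  finally show ?thesis by simp
qed

lemma pointwise:
  fixes a b :: "nat \<Rightarrow> bool"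
  assumes "even (card {i. i < 6 \<and> a i})" "even (card {i. i < 6 \<and> b i})"
  shows "(if \<forall>i<6. a i = b i then 1 else 0) + (if \<forall>i<6. a i = (\<not> b i) then 1 else 0) =
    (1 + (\<Sum>i<6. \<Sum>j\<in>{i<..<6}. (-1) ^ (of_bool (b i) + of_bool (b j)) *
        (if a i then -1 else 1) * (if a j then -1 else (1::real)))) / 16"
proof -
  define y where "y i = (if b i then -1 else 1) * (if a i then -1 else (1::real))" for i
  have y1: "\<forall>i<6. y i = 1 \<or> y i = -1" unfolding y_def by auto
  have ca: "{i\<in>{..<6}. a i} = {i. i < 6 \<and> a i}" "{i\<in>{..<6}. b i} = {i. i < 6 \<and> b i}" by auto
  have "(\<Prod>i<6. y i) = (\<Prod>i<6. if b i then -1 else 1) * (\<Prod>i<6. if a i then -1 else (1::real))"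
    unfolding y_def by (rule prod.distrib)
  also have "\<dots> = 1" unfolding prod_sign[OF finite_lessThan] ca using assms by simp
  finally have y2: "(\<Prod>i<6. y i) = 1" .
  have e1: "(\<forall>i<6. y i = 1) \<longleftrightarrow> (\<forall>i<6. a i = b i)" unfolding y_def by auto
  have e2: "(\<forall>i<6. y i = -1) \<longleftrightarrow> (\<forall>i<6. a i = (\<not> b i))" unfolding y_def by auto
  have nb: "\<not> ((\<forall>i<6. a i = b i) \<and> (\<forall>i<6. a i = (\<not> b i)))"
  proof
    assume h: "(\<forall>i<6. a i = b i) \<and> (\<forall>i<6. a i = (\<not> b i))"
    have "(0::nat) < 6" by simp
    then have "a 0 = b 0" "a 0 = (\<not> b 0)" using h by blast+
    then show False by simp
  qed
  have ey: "(-1) ^ (of_bool (b i) + of_bool (b j)) * (if a i then -1 else 1) * (if a j then -1 else (1::real))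
      = y i * y j" for i j
    unfolding y_def power_add by auto
  have "(if \<forall>i<6. a i = b i then 1 else 0) + (if \<forall>i<6. a i = (\<not> b i) then 1 else (0::real)) =
     of_bool ((\<forall>i<6. y i = 1) \<or> (\<forall>i<6. y i = -1))"
    unfolding e1 e2 using nb by auto
  also have "\<dots> = (1 + (\<Sum>i<6. \<Sum>j\<in>{i<..<6}. y i * y j)) / 16" by (rule core[OF y1 y2])
  finally show ?thesis unfolding ey .
qed

lemma card_filter_real:
  assumes "finite A"
  shows "real (card {x\<in>A. Q x}) = (\<Sum>x\<in>A. if Q x then 1 else 0)"
  using sum.inter_filter[OF assms, of "\<lambda>_. 1::real" Q] by simp


theorem mainTheorem1:
  fixes n :: nat and P :: "'p set" and L :: "'p set set" and C :: "nat \<Rightarrow> 'p set set"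
    and R :: "'p set set" and b :: "nat \<Rightarrow> bool"
  assumes "even n"
    and "is_net 6 n P L C"
    and "is_relation P L R"
    and "even (card {i. i < 6 \<and> b i})"
  shows "real (t_count 6 P C R b + t_count 6 P C R (\<lambda>i. \<not> b i)) =
    real n ^ 2 / 16 + 1/4 * (\<Sum>i<6. \<Sum>j\<in>{i<..<6}.
       (-1) ^ (of_bool (b i) + of_bool (b j)) *
       (real n / 2 - real (rel_type C R i)) * (real n / 2 - real (rel_type C R j)))"
proof -
  note N = assms(2)
  have fP: "finite P" using netD(1)[OF N] .
  define x where "x i p = (if lnp C i p \<in> R then -1 else (1::real))" for i p
  define c where "c i j = ((-1) ^ (of_bool (b i) + of_bool (b j)) :: real)" for i j
  define F where "F p = (\<Sum>i<6. \<Sum>j\<in>{i<..<6}. c i j * x i p * x j p)" for p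
  have pw: "(if \<forall>i<6. point_type 6 C R p i = b i then 1 else 0) +
            (if \<forall>i<6. point_type 6 C R p i = (\<not> b i) then 1 else 0) = (1 + F p) / (16::real)"
    if p: "p \<in> P" for p
  proof -
    have pt: "point_type 6 C R p i = (lnp C i p \<in> R)" if "i < 6" for i
      using pt_ln[OF N that p] .
    have "{i. i < 6 \<and> point_type 6 C R p i} = {i. i < 6 \<and> lnp C i p \<in> R}" using pt by auto
    then have ev: "even (card {i. i < 6 \<and> point_type 6 C R p i})"
      using pt_even[OF N assms(3) p] by simp
    have "(\<Sum>i<6. \<Sum>j\<in>{i<..<6}. (-1) ^ (of_bool (b i) + of_bool (b j)) *
        (if point_type 6 C R p i then -1 else 1) * (if point_type 6 C R p j then -1 else (1::real)))
       = F p"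
      unfolding F_def c_def x_def
      by (rule sum.cong[OF refl], rule sum.cong[OF refl]) (simp add: pt)
    then show ?thesis using pointwise[OF ev assms(4)] by simp
  qed
  have "real (t_count 6 P C R b + t_count 6 P C R (\<lambda>i. \<not> b i)) =
     (\<Sum>p\<in>P. (if \<forall>i<6. point_type 6 C R p i = b i then 1 else 0) +
            (if \<forall>i<6. point_type 6 C R p i = (\<not> b i) then 1 else 0))"
    unfolding t_count_def of_nat_add card_filter_real[OF fP] by (simp add: sum.distrib)
  also have "\<dots> = (\<Sum>p\<in>P. (1 + F p) / 16)" using pw by (rule sum.cong[OF refl])
  also have "\<dots> = (real (card P) + (\<Sum>p\<in>P. F p)) / 16"
    by (simp add: sum_divide_distrib[symmetric] sum.distrib)
  also have "(\<Sum>p\<in>P. F p) = (\<Sum>i<6. \<Sum>j\<in>{i<..<6}. c i j * (\<Sum>p\<in>P. x i p * x j p))"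
    unfolding F_def
    by (simp add: sum.swap[of _ P] sum_distrib_left mult.assoc)
  also have "\<dots> = (\<Sum>i<6. \<Sum>j\<in>{i<..<6}. c i j * (4 * ((real n / 2 - real (rel_type C R i)) * (real n / 2 - real (rel_type C R j)))))"
  proof (rule sum.cong[OF refl], rule sum.cong[OF refl])
    fix i j :: nat assume i: "i \<in> {..<6}" and j: "j \<in> {i<..<6}"
    have "(\<Sum>p\<in>P. x i p * x j p) = (real n - 2 * real (rel_type C R i)) * (real n - 2 * real (rel_type C R j))"
      unfolding x_def by (rule sum_pair[OF N]) (use i j in auto)
    also have "\<dots> = 4 * ((real n / 2 - real (rel_type C R i)) * (real n / 2 - real (rel_type C R j)))"
      by (simp add: algebra_simps)
    finally show "c i j * (\<Sum>p\<in>P. x i p * x j p) = c i j * (4 * ((real n / 2 - real (rel_type C R i)) * (real n / 2 - real (rel_type C R j))))"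
      by simp
  qed
  also have "\<dots> = 4 * (\<Sum>i<6. \<Sum>j\<in>{i<..<6}. c i j * (real n / 2 - real (rel_type C R i)) * (real n / 2 - real (rel_type C R j)))"
    by (simp add: sum_distrib_left mult_ac)
  finally show ?thesis unfolding c_def using netD(2)[OF N] by simp
qed

end
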